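(* Let $L$ be a generic length vector satisfying the strict triangle inequality. A vertex of $\Gamma(L)$ labeled $(I,J,K)$ is incident to exactly $2^{i}+2^{j}+2^{k}-6$ edges, where $i,j,k$ are the cardinalities of $I,J,K$ respectively.
   Context: Let $n\ge 4$ and $L=(l_1,\dots,l_n)$ be positive reals with $l_i<\sum_{j\ne i}l_j$ for every $i$ (strict triangle inequality), and generic: there is no $J\subseteq[n]$ with $\sum_{i\in J}l_i=\sum_{i\notin J}l_i$. Here $[n]=\{1,\dots,n\}$ and $|L|=\sum_{i=1}^n l_i$. A set $I\subseteq[n]$ is short if $\sum_{i\in I}l_i<|L|/2$ and long otherwise. A cyclically ordered partition of $[n]$ into $k$ parts is a sequence $(A_1,\dots,A_k)$ of pairwise disjoint nonempty sets with union $[n]$, considered up to cyclic shifts $(A_1,\dots,A_k)\sim(A_2,\dots,A_k,A_1)$; there is no ordering inside a part. It is admissible if every part is short. The graph $\Gamma(L)$ has as vertices the admissible cyclically ordered partitions of $[n]$ into 3 parts, written $(I,J,K)$, and as edges the admissible cyclically ordered partitions into 4 parts $(A,B,C,D)$; such an edge is incident to each of the partitions $(A\cup B,C,D)$, $(A,B\cup C,D)$, $(A,B,C\cup D)$, $(D\cup A,B,C)$ that is admissible. *)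

theory Defs
  imports Complex_Main
begin

definition total_len :: "(nat \<Rightarrow> real) \<Rightarrow> nat \<Rightarrow> real" where
  "total_len l n = (\<Sum>i\<in>{1..n}. l i)"

definition short :: "(nat \<Rightarrow> real) \<Rightarrow> nat \<Rightarrow> nat set \<Rightarrow> bool" where
  "short l n S \<longleftrightarrow> (\<Sum>i\<in>S. l i) < total_len l n / 2"

definition strict_triangle :: "(nat \<Rightarrow> real) \<Rightarrow> nat \<Rightarrow> bool" where
  "strict_triangle l n \<longleftrightarrow> (\<forall>i\<in>{1..n}. l i < (\<Sum>j\<in>{1..n} - {i}. l j))"

definition generic :: "(nat \<Rightarrow> real) \<Rightarrow> nat \<Rightarrow> bool" where
  "generic l n \<longleftrightarrow> (\<forall>J\<subseteq>{1..n}. (\<Sum>i\<in>J. l i) \<noteq> (\<Sum>i\<in>{1..n} - J. l i))"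

definition ordered_partition :: "nat \<Rightarrow> nat set list \<Rightarrow> bool" where
  "ordered_partition n xs \<longleftrightarrow>
     (\<forall>A\<in>set xs. A \<noteq> {}) \<and>
     (\<forall>i<length xs. \<forall>j<length xs. i \<noteq> j \<longrightarrow> xs ! i \<inter> xs ! j = {}) \<and>
     \<Union>(set xs) = {1..n}"

text \<open>Cyclically ordered sequence: equivalence class under cyclic shifts.\<close>
definition cyc :: "'a list \<Rightarrow> 'a list set" where
  "cyc xs = {rotate k xs | k. True}"

definition adm_cyc_partitions :: "(nat \<Rightarrow> real) \<Rightarrow> nat \<Rightarrow> nat \<Rightarrow> nat set list set set" where
  "adm_cyc_partitions l n k =
     {cyc xs | xs. length xs = k \<and> ordered_partition n xs \<and> (\<forall>A\<in>set xs. short l n A)}"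

definition Gamma_vertices :: "(nat \<Rightarrow> real) \<Rightarrow> nat \<Rightarrow> nat set list set set" where
  "Gamma_vertices l n = adm_cyc_partitions l n 3"

definition Gamma_edges :: "(nat \<Rightarrow> real) \<Rightarrow> nat \<Rightarrow> nat set list set set" where
  "Gamma_edges l n = adm_cyc_partitions l n 4"

definition incident :: "nat set list set \<Rightarrow> nat set list set \<Rightarrow> bool" where
  "incident e v \<longleftrightarrow> (\<exists>A B C D. [A, B, C, D] \<in> e \<and>
      v \<in> {cyc [A \<union> B, C, D], cyc [A, B \<union> C, D], cyc [A, B, C \<union> D], cyc [D \<union> A, B, C]})"

end

theory Submission imports Defs begin

lemma cyc_rotate: "cyc (rotate k xs) = cyc xs"
proof
  show "cyc (rotate k xs) \<subseteq> cyc xs" by (auto simp: cyc_def rotate_rotate)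
  show "cyc xs \<subseteq> cyc (rotate k xs)"
  proof
    fix ys assume "ys \<in> cyc xs"
    then obtain j where j: "ys = rotate j xs" by (auto simp: cyc_def)
    let ?L = "length xs"
    show "ys \<in> cyc (rotate k xs)"
    proof (cases "?L = 0")
      case True then show ?thesis using j by (auto simp: cyc_def)
    next
      case False
      have "k \<le> ?L * k" using False by (auto simp: Suc_le_eq)
      have "rotate (j + ?L * k - k) (rotate k xs) = rotate (j + ?L*k) xs"
        proof -
          have e: "j + ?L*k - k + k = j + ?L*k" using \<open>k \<le> ?L * k\<close> by linarith
          show ?thesis by (metis e rotate_rotate)
        qed
      also have "\<dots> = rotate j xs"
        by (metis mod_mult_self2 rotate_conv_mod mult.commute)
      finally show ?thesis using j unfolding cyc_def by (metis (mono_tags, lifting) mem_Collect_eq)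
    qed
  qed
qed

lemma cyc_eq_rot: "cyc xs = cyc ys \<Longrightarrow> \<exists>k. ys = rotate k xs"
proof -
  assume "cyc xs = cyc ys"
  moreover have "ys \<in> cyc ys" unfolding cyc_def by (metis (mono_tags) mem_Collect_eq rotate0 id_apply)
  ultimately show ?thesis by (auto simp: cyc_def)
qed

lemma t1: "rotate 1 [a,b,c,d] = [b,c,d,a]" by simp
lemma t2: "rotate 2 [a,b,c,d] = [c,d,a,b]" by (simp add: numeral_eq_Suc)
lemma t3: "rotate 3 [a,b,c,d] = [d,a,b,c]" by (simp add: numeral_eq_Suc)
lemma t4: "(k::nat) mod 4 = 0 \<or> k mod 4 = 1 \<or> k mod 4 = 2 \<or> k mod 4 = 3" by presburger
lemma t5: "rotate k [a,b,c,d] = rotate (k mod 4) [a,b,c,d]" using rotate_conv_mod[of k "[a,b,c,d]"] by simp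
lemma rot4: "rotate k [a,b,c,d] \<in> {[a,b,c,d],[b,c,d,a],[c,d,a,b],[d,a,b,c]}"
proof -
  have "rotate k [a,b,c,d] = [a,b,c,d] \<or> rotate k [a,b,c,d] = [b,c,d,a] \<or> rotate k [a,b,c,d] = [c,d,a,b] \<or> rotate k [a,b,c,d] = [d,a,b,c]"
    using t4[of k] t5[of k a b c d] t1[of a b c d] t2[of a b c d] t3[of a b c d] by (elim disjE) auto
  then show ?thesis by (simp only: insert_iff empty_iff simp_thms)
qed
lemma r31: "rotate 1 [a,b,c] = [b,c,a]" by simp
lemma r32: "rotate 2 [a,b,c] = [c,a,b]" by (simp add: numeral_eq_Suc)
lemma m3: "(k::nat) mod 3 = 0 \<or> k mod 3 = 1 \<or> k mod 3 = 2" by presburger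
lemma r3m: "rotate k [a,b,c] = rotate (k mod 3) [a,b,c]" using rotate_conv_mod[of k "[a,b,c]"] by simp
lemma rot3: "rotate k [a,b,c] \<in> {[a,b,c],[b,c,a],[c,a,b]}"
proof -
  have "rotate k [a,b,c] = [a,b,c] \<or> rotate k [a,b,c] = [b,c,a] \<or> rotate k [a,b,c] = [c,a,b]"
    using m3[of k] r3m[of k a b c] r31[of a b c] r32[of a b c] by (elim disjE) auto
  then show ?thesis by (simp only: insert_iff empty_iff simp_thms)
qed
lemma all4: "(\<forall>i<Suc (Suc (Suc (Suc 0))). P i) \<longleftrightarrow> P 0 \<and> P (Suc 0) \<and> P (Suc (Suc 0)) \<and> P (Suc (Suc (Suc 0)))"
  by (auto simp: less_Suc_eq)
lemma all3: "(\<forall>i<Suc (Suc (Suc 0)). P i) \<longleftrightarrow> P 0 \<and> P (Suc 0) \<and> P (Suc (Suc 0))"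
  by (auto simp: less_Suc_eq)

lemma op4: "ordered_partition n [A,B,C,D] \<longleftrightarrow> A \<noteq> {} \<and> B \<noteq> {} \<and> C \<noteq> {} \<and> D \<noteq> {} \<and>
  A \<inter> B = {} \<and> A \<inter> C = {} \<and> A \<inter> D = {} \<and> B \<inter> C = {} \<and> B \<inter> D = {} \<and> C \<inter> D = {} \<and>
  A \<union> B \<union> C \<union> D = {1..n}"
  unfolding ordered_partition_def
  by (simp add: all4 Un_assoc Int_commute[of B A] Int_commute[of C A] Int_commute[of D A] Int_commute[of C B] Int_commute[of D B] Int_commute[of D C]) argo

lemma op3: "ordered_partition n [A,B,C] \<longleftrightarrow> A \<noteq> {} \<and> B \<noteq> {} \<and> C \<noteq> {} \<and>
  A \<inter> B = {} \<and> A \<inter> C = {} \<and> B \<inter> C = {} \<and> A \<union> B \<union> C = {1..n}"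
  unfolding ordered_partition_def
  by (simp add: all3 Un_assoc Int_commute[of B A] Int_commute[of C A] Int_commute[of C B]) argo


lemma short_mono:
  assumes "short l n P" "X \<subseteq> P" "P \<subseteq> {1..n}" "\<forall>i\<in>{1..n}. l i > 0"
  shows "short l n X"
proof -
  have "finite P" using assms(3) finite_subset by blast
  have "(\<Sum>i\<in>X. l i) \<le> (\<Sum>i\<in>P. l i)"
    by (rule sum_mono2[OF \<open>finite P\<close> assms(2)]) (use assms(3,4) in force)
  then show ?thesis using assms(1) by (simp add: short_def)
qed

lemma cyc_self: "xs \<in> cyc xs"
  unfolding cyc_def by (metis (mono_tags) mem_Collect_eq rotate0 id_apply)

lemma cyc4_eq: "cyc [a,b,c,d] = cyc [a',b',c',d'] \<Longrightarrow>
   [a',b',c',d'] \<in> {[a,b,c,d],[b,c,d,a],[c,d,a,b],[d,a,b,c]}"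
  by (metis cyc_eq_rot rot4)

lemma cyc3_eq: "cyc [a,b,c] = cyc [a',b',c'] \<Longrightarrow>
   [a',b',c'] \<in> {[a,b,c],[b,c,a],[c,a,b]}"
  by (metis cyc_eq_rot rot3)

lemma cyc4_rot1: "cyc [b,c,d,a] = cyc [a,b,c,d]"
  using cyc_rotate[of 1 "[a,b,c,d]"] by simp
lemma cyc3_rot1: "cyc [b,c,a] = cyc [a,b,c]"
  using cyc_rotate[of 1 "[a,b,c]"] by simp

definition sp :: "nat set \<Rightarrow> nat set set" where
  "sp P = {X. X \<subseteq> P \<and> X \<noteq> {} \<and> X \<noteq> P}"

lemma card_sp: assumes "finite P" "P \<noteq> {}" shows "card (sp P) = 2 ^ card P - 2"
proof -
  have "sp P = Pow P - {{}, P}" unfolding sp_def by auto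
  moreover have "card {{}, P} = 2" using assms(2) by simp
  ultimately show ?thesis using assms(1) by (simp add: card_Diff_subset card_Pow)
qed

lemma inj_sp:
  assumes "Q \<noteq> {}" "R \<noteq> {}" "P \<inter> Q = {}" "P \<inter> R = {}" "Q \<inter> R = {}"
  shows "inj_on (\<lambda>X. cyc [X, P - X, Q, R]) (sp P)"
proof (rule inj_onI)
  fix X Y assume X: "X \<in> sp P" and Y: "Y \<in> sp P" and e: "cyc [X, P - X, Q, R] = cyc [Y, P - Y, Q, R]"
  from cyc4_eq[OF e] have "[Y, P - Y, Q, R] \<in> {[X, P - X, Q, R],[P - X, Q, R, X],[Q, R, X, P - X],[R, X, P - X, Q]}" .
  then show "X = Y" using X Y assms unfolding sp_def by auto
qed

lemma disj1:
  assumes "P \<noteq> {}" "Q \<noteq> {}" "R \<noteq> {}" "P \<inter> Q = {}" "P \<inter> R = {}" "Q \<inter> R = {}"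
    "X \<in> sp P" "Y \<in> sp Q"
  shows "cyc [X, P - X, Q, R] \<noteq> cyc [Y, Q - Y, R, P]"
proof
  assume e: "cyc [X, P - X, Q, R] = cyc [Y, Q - Y, R, P]"
  from cyc4_eq[OF e] have "[Y, Q - Y, R, P] \<in> {[X, P - X, Q, R],[P - X, Q, R, X],[Q, R, X, P - X],[R, X, P - X, Q]}" .
  then show False using assms unfolding sp_def by auto
qed

lemma disj2:
  assumes "P \<noteq> {}" "Q \<noteq> {}" "R \<noteq> {}" "P \<inter> Q = {}" "P \<inter> R = {}" "Q \<inter> R = {}"
    "X \<in> sp P" "Y \<in> sp R"
  shows "cyc [X, P - X, Q, R] \<noteq> cyc [Y, R - Y, P, Q]"
proof
  assume e: "cyc [X, P - X, Q, R] = cyc [Y, R - Y, P, Q]"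
  from cyc4_eq[OF e] have "[Y, R - Y, P, Q] \<in> {[X, P - X, Q, R],[P - X, Q, R, X],[Q, R, X, P - X],[R, X, P - X, Q]}" .
  then show False using assms unfolding sp_def by auto
qed


lemma gen:
  assumes op: "ordered_partition n [P,Q,R]" and sh: "short l n P" "short l n Q" "short l n R"
    and pos: "\<forall>i\<in>{1..n}. l i > 0" and X: "X \<in> sp P"
  shows "cyc [X, P - X, Q, R] \<in> Gamma_edges l n \<and> incident (cyc [X, P - X, Q, R]) (cyc [P,Q,R])"
proof
  have o3: "P \<noteq> {} \<and> Q \<noteq> {} \<and> R \<noteq> {} \<and> P \<inter> Q = {} \<and> P \<inter> R = {} \<and> Q \<inter> R = {} \<and> P \<union> Q \<union> R = {1..n}"
    using op by (simp add: op3)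
  have o4: "ordered_partition n [X, P - X, Q, R]"
    unfolding op4 using o3 X unfolding sp_def by blast
  have Psub: "P \<subseteq> {1..n}" using o3 by blast
  have "short l n X" using short_mono[OF sh(1) _ Psub pos] X unfolding sp_def by blast
  moreover have "short l n (P - X)" using short_mono[OF sh(1) _ Psub pos] by blast
  ultimately have "\<forall>A\<in>set [X, P - X, Q, R]. short l n A" using sh by simp
  then show "cyc [X, P - X, Q, R] \<in> Gamma_edges l n"
    unfolding Gamma_edges_def adm_cyc_partitions_def using o4 by force
  have "X \<union> (P - X) = P" using X unfolding sp_def by blast
  then show "incident (cyc [X, P - X, Q, R]) (cyc [P,Q,R])"
    unfolding incident_def using cyc_self[of "[X, P - X, Q, R]"] by force
qed

lemma core:
  assumes op: "ordered_partition n [P,Q,R,S]" and e: "cyc [P \<union> Q, R, S] = cyc [I,J,K]"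
  shows "cyc [P,Q,R,S] \<in> (\<lambda>X. cyc [X, I - X, J, K]) ` sp I \<union> (\<lambda>X. cyc [X, J - X, K, I]) ` sp J
       \<union> (\<lambda>X. cyc [X, K - X, I, J]) ` sp K"
proof -
  have o: "P \<noteq> {} \<and> Q \<noteq> {} \<and> R \<noteq> {} \<and> S \<noteq> {} \<and> P \<inter> Q = {}" using op by (simp add: op4)
  have q: "Q = (P \<union> Q) - P" and x: "P \<in> sp (P \<union> Q)" using o unfolding sp_def by blast+
  from cyc3_eq[OF e] have "[I,J,K] \<in> {[P \<union> Q, R, S],[R, S, P \<union> Q],[S, P \<union> Q, R]}" .
  then consider "I = P \<union> Q" "J = R" "K = S" | "I = R" "J = S" "K = P \<union> Q" | "I = S" "J = P \<union> Q" "K = R"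
    by auto
  then show ?thesis
  proof cases
    case 1
    have "cyc [P,Q,R,S] = (\<lambda>X. cyc [X, I - X, J, K]) P" using 1 q by simp
    then show ?thesis using x 1 by blast
  next
    case 2
    have "cyc [P,Q,R,S] = (\<lambda>X. cyc [X, K - X, I, J]) P" using 2 q by simp
    then show ?thesis using x 2 by blast
  next
    case 3
    have "cyc [P,Q,R,S] = (\<lambda>X. cyc [X, J - X, K, I]) P" using 3 q by simp
    then show ?thesis using x 3 by blast
  qed
qed


lemma op4_rot: "ordered_partition n [a,b,c,d] \<Longrightarrow> ordered_partition n [b,c,d,a]"
proof -
  have u: "b \<union> c \<union> d \<union> a = a \<union> b \<union> c \<union> d" by blast
  show "ordered_partition n [a,b,c,d] \<Longrightarrow> ordered_partition n [b,c,d,a]"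
    unfolding op4 u by (simp add: Int_commute[of b a] Int_commute[of c a] Int_commute[of d a])
qed
lemma op3_rot: "ordered_partition n [a,b,c] \<Longrightarrow> ordered_partition n [b,c,a]"
proof -
  have u: "b \<union> c \<union> a = a \<union> b \<union> c" by blast
  show "ordered_partition n [a,b,c] \<Longrightarrow> ordered_partition n [b,c,a]"
    unfolding op3 u by (simp add: Int_commute[of b a] Int_commute[of c a])
qed

lemma len3: "length xs = 3 \<Longrightarrow> \<exists>a b c. xs = [a,b,c]"
  by (auto simp: numeral_eq_Suc length_Suc_conv)
lemma len4: "length xs = 4 \<Longrightarrow> \<exists>a b c d. xs = [a,b,c,d]"
  by (auto simp: numeral_eq_Suc length_Suc_conv)


theorem mainTheorem3:
  fixes l :: "nat \<Rightarrow> real" and n :: nat and I J K :: "nat set"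
  assumes "n \<ge> 4"
    and "\<forall>i\<in>{1..n}. l i > 0"
    and "strict_triangle l n"
    and "generic l n"
    and "cyc [I, J, K] \<in> Gamma_vertices l n"
  shows "int (card {e \<in> Gamma_edges l n. incident e (cyc [I, J, K])})
           = 2 ^ card I + 2 ^ card J + 2 ^ card K - 6"
proof -
  note pos = assms(2)
  obtain xs where v: "cyc [I,J,K] = cyc xs" "length xs = 3" "ordered_partition n xs"
      "\<forall>A\<in>set xs. short l n A"
    using assms(5) unfolding Gamma_vertices_def adm_cyc_partitions_def by blast
  obtain a b c where abc: "xs = [a,b,c]" using len3[OF v(2)] by blast
  have rr: "[I,J,K] \<in> {[a,b,c],[b,c,a],[c,a,b]}" using cyc3_eq[of a b c I J K] v(1) abc by simp
  have opIJK: "ordered_partition n [I,J,K]"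
  proof -
    have o1: "ordered_partition n [a,b,c]" using v(3) abc by simp
    have o2: "ordered_partition n [b,c,a]" using op3_rot[OF o1] .
    have o3: "ordered_partition n [c,a,b]" using op3_rot[OF o2] .
    show ?thesis using rr o1 o2 o3 by auto
  qed
  have shs: "short l n I" "short l n J" "short l n K"
  proof -
    have "set [I,J,K] = set xs" using rr abc by auto
    then show "short l n I" "short l n J" "short l n K" using v(4) by auto
  qed
  have o: "I \<noteq> {} \<and> J \<noteq> {} \<and> K \<noteq> {} \<and> I \<inter> J = {} \<and> I \<inter> K = {} \<and> J \<inter> K = {} \<and> I \<union> J \<union> K = {1..n}"
    using opIJK by (simp add: op3)
  have opJKI: "ordered_partition n [J,K,I]" using op3_rot[OF opIJK] .
  have opKIJ: "ordered_partition n [K,I,J]" using op3_rot[OF opJKI] .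
  have cJKI: "cyc [J,K,I] = cyc [I,J,K]" by (rule cyc3_rot1)
  have cKIJ: "cyc [K,I,J] = cyc [I,J,K]" using cyc3_rot1[of I J K] cyc3_rot1[of K I J] by simp
  define fI where "fI = (\<lambda>X. cyc [X, I - X, J, K])"
  define fJ where "fJ = (\<lambda>X. cyc [X, J - X, K, I])"
  define fK where "fK = (\<lambda>X. cyc [X, K - X, I, J])"
  let ?E = "{e \<in> Gamma_edges l n. incident e (cyc [I, J, K])}"
  have Eeq: "?E = fI ` sp I \<union> fJ ` sp J \<union> fK ` sp K"
  proof
    show "?E \<subseteq> fI ` sp I \<union> fJ ` sp J \<union> fK ` sp K"
    proof
      fix e assume "e \<in> ?E"
      then have eG: "e \<in> Gamma_edges l n" and inc: "incident e (cyc [I,J,K])" by auto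
      obtain ys where ys: "e = cyc ys" "length ys = 4" "ordered_partition n ys"
        using eG unfolding Gamma_edges_def adm_cyc_partitions_def by blast
      obtain a' b' c' d' where ys4: "ys = [a',b',c',d']" using len4[OF ys(2)] by blast
      obtain A B C D where ABCD: "[A,B,C,D] \<in> e"
        and vv: "cyc [I,J,K] \<in> {cyc [A \<union> B, C, D], cyc [A, B \<union> C, D], cyc [A, B, C \<union> D], cyc [D \<union> A, B, C]}"
        using inc unfolding incident_def by blast
      obtain k where kk: "[A,B,C,D] = rotate k ys" using ABCD ys(1) unfolding cyc_def by blast
      have eA: "e = cyc [A,B,C,D]" using kk ys(1) cyc_rotate by metis
      have oA: "ordered_partition n [A,B,C,D]"
      proof -
        have o1: "ordered_partition n [a',b',c',d']" using ys(3) ys4 by simp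
        have o2: "ordered_partition n [b',c',d',a']" using op4_rot[OF o1] .
        have o3: "ordered_partition n [c',d',a',b']" using op4_rot[OF o2] .
        have o4: "ordered_partition n [d',a',b',c']" using op4_rot[OF o3] .
        have "[A,B,C,D] \<in> {[a',b',c',d'],[b',c',d',a'],[c',d',a',b'],[d',a',b',c']}"
          using rot4[of k a' b' c' d'] kk ys4 by simp
        then show ?thesis using o1 o2 o3 o4 by auto
      qed
      have oB: "ordered_partition n [B,C,D,A]" using op4_rot[OF oA] .
      have oC: "ordered_partition n [C,D,A,B]" using op4_rot[OF oB] .
      have oD: "ordered_partition n [D,A,B,C]" using op4_rot[OF oC] .
      have r1: "cyc [B,C,D,A] = cyc [A,B,C,D]" by (rule cyc4_rot1)
      have r2: "cyc [C,D,A,B] = cyc [A,B,C,D]" by (metis cyc4_rot1)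
      have r3: "cyc [D,A,B,C] = cyc [A,B,C,D]" by (metis cyc4_rot1)
      from vv show "e \<in> fI ` sp I \<union> fJ ` sp J \<union> fK ` sp K"
      proof (elim insertE)
        assume h: "cyc [I,J,K] = cyc [A \<union> B, C, D]"
        show ?thesis unfolding fI_def fJ_def fK_def eA by (rule core[OF oA]) (rule h[symmetric])
      next
        assume h: "cyc [I,J,K] = cyc [A, B \<union> C, D]"
        have "cyc [B \<union> C, D, A] = cyc [I,J,K]" using h cyc3_rot1[of "B \<union> C" D A] by metis
        then show ?thesis unfolding fI_def fJ_def fK_def eA r1[symmetric] by (rule core[OF oB])
      next
        assume h: "cyc [I,J,K] = cyc [A, B, C \<union> D]"
        have "cyc [C \<union> D, A, B] = cyc [I,J,K]" using h cyc3_rot1[of A B "C \<union> D"] by metis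
        then show ?thesis unfolding fI_def fJ_def fK_def eA r2[symmetric] by (rule core[OF oC])
      next
        assume h: "cyc [I,J,K] = cyc [D \<union> A, B, C]"
        then have h': "cyc [D \<union> A, B, C] = cyc [I,J,K]" by simp
        show ?thesis unfolding fI_def fJ_def fK_def eA r3[symmetric] by (rule core[OF oD h'])
      qed simp
    qed
  next
    show "fI ` sp I \<union> fJ ` sp J \<union> fK ` sp K \<subseteq> ?E"
    proof (intro Un_least image_subsetI)
      fix X assume "X \<in> sp I"
      then show "fI X \<in> ?E" using gen[OF opIJK shs(1) shs(2) shs(3) pos] unfolding fI_def by blast
    next
      fix X assume "X \<in> sp J"
      then show "fJ X \<in> ?E" using gen[OF opJKI shs(2) shs(3) shs(1) pos] cJKI unfolding fJ_def by simp
    next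
      fix X assume "X \<in> sp K"
      then show "fK X \<in> ?E" using gen[OF opKIJ shs(3) shs(1) shs(2) pos] cKIJ unfolding fK_def by simp
    qed
  qed
  have sub: "I \<subseteq> {1..n}" "J \<subseteq> {1..n}" "K \<subseteq> {1..n}" using o by blast+
  have fin: "finite I" "finite J" "finite K" using sub finite_subset by blast+
  have spfin: "finite (sp I)" "finite (sp J)" "finite (sp K)" using fin unfolding sp_def by auto
  have iI: "inj_on fI (sp I)" unfolding fI_def by (rule inj_sp) (use o in blast)+
  have iJ: "inj_on fJ (sp J)" unfolding fJ_def by (rule inj_sp) (use o in blast)+
  have iK: "inj_on fK (sp K)" unfolding fK_def by (rule inj_sp) (use o in blast)+
  have cI: "card (fI ` sp I) = 2 ^ card I - 2"
    using card_image[OF iI] card_sp[of I] fin o by simp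
  have cJ: "card (fJ ` sp J) = 2 ^ card J - 2"
    using card_image[OF iJ] card_sp[of J] fin o by simp
  have cK: "card (fK ` sp K) = 2 ^ card K - 2"
    using card_image[OF iK] card_sp[of K] fin o by simp
  have n12: "fI X \<noteq> fJ Y" if "X \<in> sp I" "Y \<in> sp J" for X Y
    unfolding fI_def fJ_def by (rule disj1) (use o that in blast)+
  have n13: "fI X \<noteq> fK Y" if "X \<in> sp I" "Y \<in> sp K" for X Y
    unfolding fI_def fK_def by (rule disj2) (use o that in blast)+
  have n23: "fJ X \<noteq> fK Y" if "X \<in> sp J" "Y \<in> sp K" for X Y
    unfolding fJ_def fK_def by (rule disj1) (use o that in blast)+
  have d12: "fI ` sp I \<inter> fJ ` sp J = {}" using n12 by blast
  have d13: "fI ` sp I \<inter> fK ` sp K = {}" using n13 by blast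
  have d23: "fJ ` sp J \<inter> fK ` sp K = {}" using n23 by blast
  have cE: "card ?E = (2 ^ card I - 2) + (2 ^ card J - 2) + (2 ^ card K - 2)"
    unfolding Eeq using spfin d12 d13 d23 cI cJ cK
    by (simp add: card_Un_disjoint Int_Un_distrib2)
  have p2: "(2::nat) \<le> 2 ^ m" if "m \<ge> 1" for m
    using power_increasing[OF that, of "2::nat"] by simp
  have g: "card I \<ge> 1" "card J \<ge> 1" "card K \<ge> 1" using fin o by (auto simp: Suc_le_eq card_gt_0_iff)
  have hI: "(2::nat) \<le> 2 ^ card I" and hJ: "(2::nat) \<le> 2 ^ card J" and hK: "(2::nat) \<le> 2 ^ card K"
    using p2 g by blast+
  have "int (card ?E) = int (2 ^ card I - 2) + int (2 ^ card J - 2) + int (2 ^ card K - 2)"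
    using cE by simp
  also have "\<dots> = (2 ^ card I - 2) + (2 ^ card J - 2) + (2 ^ card K - 2)"
    using hI hJ hK by (simp add: of_nat_diff)
  finally show ?thesis by simp
qed

end
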